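(* Let $a,b,c,p\in\mathbb{C}$ with $-c\notin\mathbb{N}\cup\{0\}$. Suppose that \[ \sinh(pz)F(a,b;c;z)=\sum_{n=0}^\infty\frac{u_n-v_n}{2}z^n,\qquad |z|<1, \] where $u_n,v_n$ are given as follows: $u_0=1$, $u_1=\frac{ab}{c}+p$, $u_2=\frac{a(1+a)b(1+b)}{2c(1+c)}+\frac{abp}{c}+\frac{p^2}{2}$, $v_0=1$, $v_1=\frac{ab}{c}-p$, $v_2=\frac{a(1+a)b(1+b)}{2c(1+c)}-\frac{abp}{c}+\frac{p^2}{2}$, and for all integers $n\ge2$, \[ u_{n+1}=\frac{(a+n)(b+n)+p(c+2n)}{(n+1)(c+n)}u_n-\frac{p(a+b+2n+p-1)}{(n+1)(c+n)}u_{n-1}+\frac{p^2}{(n+1)(c+n)}u_{n-2}, \] \[ v_{n+1}=\frac{(a+n)(b+n)-p(c+2n)}{(n+1)(c+n)}v_n+\frac{p(a+b+2n-p-1)}{(n+1)(c+n)}v_{n-1}+\frac{p^2}{(n+1)(c+n)}v_{n-2}. \] That is: with $(u_n)$ and $(v_n)$ defined by these initial values and recurrences, the displayed expansion holds.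
   Context: For $a\in\mathbb{C}$, $(a)_n=a(a+1)\cdots(a+n-1)$ denotes the Pochhammer symbol, with $(a)_0=1$. For $a,b,c\in\mathbb{C}$ with $-c\notin\mathbb{N}\cup\{0\}$, the Gaussian hypergeometric function is $F(a,b;c;z)=\sum_{n=0}^\infty \frac{(a)_n(b)_n}{(c)_n\,n!}z^n$, $|z|<1$. *)

theory Defs
  imports "HOL-Analysis.Analysis"
begin

definition hyp2F1 :: "complex \<Rightarrow> complex \<Rightarrow> complex \<Rightarrow> complex \<Rightarrow> complex" where
  "hyp2F1 a b c z = (\<Sum>n. pochhammer a n * pochhammer b n / (pochhammer c n * fact n) * z ^ n)"

fun useq :: "complex \<Rightarrow> complex \<Rightarrow> complex \<Rightarrow> complex \<Rightarrow> nat \<Rightarrow> complex" where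
  "useq a b c p 0 = 1"
| "useq a b c p (Suc 0) = a * b / c + p"
| "useq a b c p (Suc (Suc 0)) =
     a * (1 + a) * b * (1 + b) / (2 * c * (1 + c)) + a * b * p / c + p ^ 2 / 2"
| "useq a b c p (Suc (Suc (Suc m))) =
     (let n = of_nat (Suc (Suc m)) :: complex in
       ((a + n) * (b + n) + p * (c + 2 * n)) / ((n + 1) * (c + n)) * useq a b c p (Suc (Suc m))
       - p * (a + b + 2 * n + p - 1) / ((n + 1) * (c + n)) * useq a b c p (Suc m)
       + p ^ 2 / ((n + 1) * (c + n)) * useq a b c p m)"

fun vseq :: "complex \<Rightarrow> complex \<Rightarrow> complex \<Rightarrow> complex \<Rightarrow> nat \<Rightarrow> complex" where
  "vseq a b c p 0 = 1"
| "vseq a b c p (Suc 0) = a * b / c - p"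
| "vseq a b c p (Suc (Suc 0)) =
     a * (1 + a) * b * (1 + b) / (2 * c * (1 + c)) - a * b * p / c + p ^ 2 / 2"
| "vseq a b c p (Suc (Suc (Suc m))) =
     (let n = of_nat (Suc (Suc m)) :: complex in
       ((a + n) * (b + n) - p * (c + 2 * n)) / ((n + 1) * (c + n)) * vseq a b c p (Suc (Suc m))
       + p * (a + b + 2 * n - p - 1) / ((n + 1) * (c + n)) * vseq a b c p (Suc m)
       + p ^ 2 / ((n + 1) * (c + n)) * vseq a b c p m)"

end

theory Submission imports Defs "HOL-Computational_Algebra.Formal_Power_Series" "HOL-Real_Asymp.Real_Asymp" begin

definition fs :: "complex \<Rightarrow> complex \<Rightarrow> complex \<Rightarrow> nat \<Rightarrow> complex" where
  "fs a b c n = pochhammer a n * pochhammer b n / (pochhammer c n * fact n)"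

lemma fsuc:
  assumes "\<forall>n::nat. c \<noteq> - of_nat n"
  shows "fs a b c (Suc n) = fs a b c n * ((a + of_nat n) * (b + of_nat n)) / ((of_nat n + 1) * (c + of_nat n))"
proof -
  have pc: "pochhammer c n \<noteq> 0" using assms by (auto simp: pochhammer_eq_0_iff)
  have cn: "c + of_nat n \<noteq> 0" using assms by (metis add.commute add_eq_0_iff)
  have fn: "(fact n :: complex) \<noteq> 0" by simp
  have n1: "(of_nat n + 1 :: complex) \<noteq> 0" by (metis of_nat_Suc of_nat_eq_0_iff nat.distinct(1) add.commute)
  show ?thesis
    unfolding fs_def using pc cn fn n1 by (simp add: pochhammer_Suc fact_Suc field_simps)
qed

lemma frec:
  assumes "\<forall>n::nat. c \<noteq> - of_nat n"
  shows "(of_nat n + 1) * (c + of_nat n) * fs a b c (Suc n) = (a + of_nat n) * (b + of_nat n) * fs a b c n"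
proof -
  have pc: "pochhammer c n \<noteq> 0" using assms by (auto simp: pochhammer_eq_0_iff)
  have cn: "c + of_nat n \<noteq> 0" using assms by (metis add.commute add_eq_0_iff)
  have fn: "(fact n :: complex) \<noteq> 0" by simp
  have n1: "(of_nat n + 1 :: complex) \<noteq> 0" by (metis of_nat_Suc of_nat_eq_0_iff nat.distinct(1) add.commute)
  have "fs a b c (Suc n) = fs a b c n * ((a + of_nat n) * (b + of_nat n)) / ((of_nat n + 1) * (c + of_nat n))"
    unfolding fs_def using pc cn fn n1 by (simp add: pochhammer_Suc fact_Suc field_simps)
  moreover have d: "(of_nat n + 1) * (c + of_nat n) \<noteq> 0" using cn n1 by simp
  ultimately show ?thesis by (metis (no_types, lifting) nonzero_mult_div_cancel_left times_divide_eq_right mult.commute)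
qed

lemma fode:
  fixes a b c :: complex
  assumes "\<forall>n::nat. c \<noteq> - of_nat n"
  defines "F \<equiv> Abs_fps (fs a b c)"
  shows "fps_X * fps_deriv (fps_deriv F) + fps_const c * fps_deriv F - fps_X * fps_deriv F
     - fps_X^2 * fps_deriv (fps_deriv F) - fps_X * (fps_const (a+b) * fps_deriv F) - fps_const (a*b) * F = 0"
proof (rule fps_ext)
  fix n
  have r: "(of_nat n + 1) * (c + of_nat n) * fs a b c (Suc n) = (a + of_nat n) * (b + of_nat n) * fs a b c n"
    by (rule frec[OF assms(1)])
  show "fps_nth (fps_X * fps_deriv (fps_deriv F) + fps_const c * fps_deriv F - fps_X * fps_deriv F
     - fps_X^2 * fps_deriv (fps_deriv F) - fps_X * (fps_const (a+b) * fps_deriv F) - fps_const (a*b) * F) n = fps_nth 0 n"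
  proof (cases n)
    case 0 then show ?thesis using r by (simp add: F_def fps_X_power_mult_nth algebra_simps)
  next
    case (Suc m)
    show ?thesis
    proof (cases m)
      case 0 then show ?thesis using r Suc by (simp add: F_def fps_X_power_mult_nth algebra_simps)
    next
      case (Suc k)
      then show ?thesis using r \<open>n = Suc m\<close> by (simp add: F_def fps_X_power_mult_nth algebra_simps)
    qed
  qed
qed

lemma Lid:
  fixes a b c q :: complex and F :: "complex fps"
  defines "U \<equiv> fps_exp q * F"
  shows "fps_deriv (fps_X * fps_deriv U + fps_const (c-1) * U)
     - (fps_X * (fps_X * fps_deriv (fps_deriv U) + fps_deriv U) + fps_X * (fps_const (a+b) * fps_deriv U) + fps_const (a*b) * U)
     - fps_const q * (fps_const c * U + 2 * (fps_X * fps_deriv U))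
     + fps_X * (fps_const q * (fps_const (a+b+q+1) * U + 2 * (fps_X * fps_deriv U)))
     - fps_const (q^2) * (fps_X^2 * U)
   = fps_exp q * (fps_X * fps_deriv (fps_deriv F) + fps_const c * fps_deriv F - fps_X * fps_deriv F
     - fps_X^2 * fps_deriv (fps_deriv F) - fps_X * (fps_const (a+b) * fps_deriv F) - fps_const (a*b) * F)"
proof -
  have d1: "fps_deriv U = fps_exp q * (fps_const q * F + fps_deriv F)"
    by (simp add: U_def algebra_simps)
  have d2: "fps_deriv (fps_deriv U) = fps_exp q * (fps_const q * (fps_const q * F + fps_deriv F) + (fps_const q * fps_deriv F + fps_deriv (fps_deriv F)))"
    unfolding d1 by (simp add: algebra_simps)
  have d3: "fps_deriv (fps_X * fps_deriv U + fps_const (c-1) * U) = fps_deriv U + fps_X * fps_deriv (fps_deriv U) + fps_const (c-1) * fps_deriv U"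
    by simp
  have c: "fps_const (c-1) = fps_const c - 1" "fps_const (a+b) = fps_const a + fps_const b"
     "fps_const (a*b) = fps_const a * fps_const b" "fps_const (a+b+q+1) = fps_const a + fps_const b + fps_const q + 1"
     "fps_const (q^2) = fps_const q * fps_const q"
    by (simp_all add: power2_eq_square)
  show ?thesis unfolding d3 unfolding d2 unfolding d1 unfolding c unfolding U_def
    by algebra
qed

lemma Urec:
  fixes a b c q :: complex
  assumes "\<forall>n::nat. c \<noteq> - of_nat n" and n2: "n \<ge> 2"
  defines "U \<equiv> fps_exp q * Abs_fps (fs a b c)"
  shows "(of_nat n + 1) * (c + of_nat n) * fps_nth U (Suc n) =
     ((a + of_nat n) * (b + of_nat n) + q * (c + 2 * of_nat n)) * fps_nth U n
     - q * (a + b + 2 * of_nat n + q - 1) * fps_nth U (n - 1) + q^2 * fps_nth U (n - 2)"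
proof -
  have L: "fps_deriv (fps_X * fps_deriv U + fps_const (c-1) * U)
     - (fps_X * (fps_X * fps_deriv (fps_deriv U) + fps_deriv U) + fps_X * (fps_const (a+b) * fps_deriv U) + fps_const (a*b) * U)
     - fps_const q * (fps_const c * U + 2 * (fps_X * fps_deriv U))
     + fps_X * (fps_const q * (fps_const (a+b+q+1) * U + 2 * (fps_X * fps_deriv U)))
     - fps_const (q^2) * (fps_X^2 * U) = 0"
    unfolding U_def Lid fode[OF assms(1)] by simp
  have "fps_nth (fps_deriv (fps_X * fps_deriv U + fps_const (c-1) * U)
     - (fps_X * (fps_X * fps_deriv (fps_deriv U) + fps_deriv U) + fps_X * (fps_const (a+b) * fps_deriv U) + fps_const (a*b) * U)
     - fps_const q * (fps_const c * U + 2 * (fps_X * fps_deriv U))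
     + fps_X * (fps_const q * (fps_const (a+b+q+1) * U + 2 * (fps_X * fps_deriv U)))
     - fps_const (q^2) * (fps_X^2 * U)) n = 0" unfolding L by simp
  then show ?thesis
  proof (cases n)
    case 0 then show ?thesis using n2 by simp
  next
    case (Suc m)
    show ?thesis
    proof (cases m)
      case 0 then show ?thesis using n2 \<open>n = Suc m\<close> by simp
    next
      case (Suc k)
      show ?thesis using \<open>fps_nth _ n = 0\<close> \<open>n = Suc m\<close> Suc
        apply (simp add: fps_X_power_mult_nth numeral_fps_const)
        apply (simp add: algebra_simps)
        done
    qed
  qed
qed

lemma vseq_useq: "vseq a b c p n = useq a b c (-p) n"
  by (induction a b c p n rule: vseq.induct) (simp_all add: Let_def diff_divide_distrib add_divide_distrib algebra_simps)

lemma aux_div: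
  fixes d X A B C u2 u1 u0 :: complex
  assumes "d \<noteq> 0" "d * X = A * u2 - B * u1 + C * u0"
  shows "A / d * u2 - B / d * u1 + C / d * u0 = X"
proof -
  have "X = (A * u2 - B * u1 + C * u0) / d" using assms by (simp add: field_simps)
  then show ?thesis by (simp add: diff_divide_distrib add_divide_distrib)
qed

lemma useq_U:
  fixes a b c q :: complex
  assumes "\<forall>n::nat. c \<noteq> - of_nat n"
  shows "useq a b c q n = fps_nth (fps_exp q * Abs_fps (fs a b c)) n"
  using assms
proof (induction a b c q n rule: useq.induct)
  case (1 a b c p)
  then show ?case by (simp add: fps_mult_nth fs_def)
next
  case (2 a b c p)
  have c0: "c \<noteq> 0" using 2 by (metis neg_0_equal_iff_equal of_nat_0)
  then show ?case by (simp add: fps_mult_nth fs_def field_simps)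
next
  case (3 a b c p)
  have c0: "c \<noteq> 0" using 3 by (metis neg_0_equal_iff_equal of_nat_0)
  have c1: "1 + c \<noteq> 0" using 3 by (metis add.commute add_eq_0_iff of_nat_1)
  then show ?case using c0 by (simp add: fps_mult_nth fs_def field_simps numeral_2_eq_2 pochhammer_Suc)
next
  case (4 a b c p m)
  let ?U = "fps_nth (fps_exp p * Abs_fps (fs a b c))"
  define n :: complex where "n = of_nat (Suc (Suc m))"
  have r: "(n + 1) * (c + n) * ?U (Suc (Suc (Suc m))) =
     ((a + n) * (b + n) + p * (c + 2 * n)) * ?U (Suc (Suc m))
     - p * (a + b + 2 * n + p - 1) * ?U (Suc m) + p^2 * ?U m"
    using Urec[OF 4(4), where n="Suc (Suc m)" and a=a and b=b and q=p] unfolding n_def by simp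
  have cn: "c + n \<noteq> 0" using 4(4) unfolding n_def by (metis add.commute add_eq_0_iff)
  have n1: "n + 1 \<noteq> 0" unfolding n_def by (metis of_nat_Suc of_nat_eq_0_iff nat.distinct(1) add.commute)
  have "useq a b c p (Suc (Suc (Suc m))) =
       ((a + n) * (b + n) + p * (c + 2 * n)) / ((n + 1) * (c + n)) * ?U (Suc (Suc m))
       - p * (a + b + 2 * n + p - 1) / ((n + 1) * (c + n)) * ?U (Suc m)
       + p ^ 2 / ((n + 1) * (c + n)) * ?U m"
    using 4 by (simp add: Let_def n_def)
  also have "\<dots> = ?U (Suc (Suc (Suc m)))"
    by (rule aux_div) (use r cn n1 in auto)
  finally show ?case .
qed

lemma hyp_summable:
  fixes a b c z :: complex
  assumes c: "\<forall>n::nat. c \<noteq> - of_nat n" and z: "norm z < 1"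
  shows "summable (\<lambda>n. norm (fs a b c n * z ^ n))"
proof -
  define r where "r = (1 + norm z) / 2"
  have r1: "r < 1" using z unfolding r_def by simp
  define g where "g n = ((real n + norm a)*(real n + norm b))/((real n + 1)*(real n - norm c))" for n
  have "g \<longlonglongrightarrow> 1" unfolding g_def by real_asymp
  then have "(\<lambda>n. g n * norm z) \<longlonglongrightarrow> 1 * norm z" by (intro tendsto_mult_right)
  moreover have "1 * norm z < r" using z unfolding r_def by simp
  ultimately have ev1: "eventually (\<lambda>n. g n * norm z < r) sequentially" by (rule order_tendstoD)
  have ev2: "eventually (\<lambda>n. real n > norm c + 1) sequentially" by real_asymp
  from eventually_conj[OF ev1 ev2] obtain N where N: "\<And>n. n \<ge> N \<Longrightarrow> g n * norm z < r \<and> real n > norm c + 1"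
    unfolding eventually_sequentially by blast
  show ?thesis
  proof (rule summable_ratio_test[OF r1, of N])
    fix n assume "n \<ge> N"
    with N have gn: "g n * norm z < r" and nc: "real n > norm c + 1" by auto
    have cn: "c + of_nat n \<noteq> 0" using c by (metis add.commute add_eq_0_iff)
    have n1: "(of_nat n + 1 :: complex) \<noteq> 0" by (metis of_nat_Suc of_nat_eq_0_iff nat.distinct(1) add.commute)
    have fsuc: "fs a b c (Suc n) = fs a b c n * ((a + of_nat n) * (b + of_nat n) / ((of_nat n + 1) * (c + of_nat n)))"
      using fsuc[OF c, of a b n] by simp
    have na: "norm (a + of_nat n) \<le> real n + norm a" by (metis add.commute norm_of_nat norm_triangle_ineq)
    have nb: "norm (b + of_nat n) \<le> real n + norm b" by (metis add.commute norm_of_nat norm_triangle_ineq)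
    have nc2: "norm (c + of_nat n) \<ge> real n - norm c"
      by (metis add.commute norm_diff_ineq norm_of_nat)
    have nn: "norm (of_nat n + 1 :: complex) = real n + 1"
      by (metis norm_of_nat of_nat_Suc add.commute of_real_of_nat_eq)
    have rho: "norm ((a + of_nat n) * (b + of_nat n) / ((of_nat n + 1) * (c + of_nat n))) \<le> g n"
    proof -
      have "norm ((a + of_nat n) * (b + of_nat n) / ((of_nat n + 1) * (c + of_nat n)))
          = norm (a + of_nat n) * norm (b + of_nat n) / ((real n + 1) * norm (c + of_nat n))"
        by (simp add: norm_mult norm_divide nn)
      also have "\<dots> \<le> ((real n + norm a)*(real n + norm b))/((real n + 1)*(real n - norm c))"
        using na nb nc2 nc by (intro frac_le mult_mono mult_pos_pos) auto
      finally show ?thesis unfolding g_def .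
    qed
    have "norm (fs a b c (Suc n) * z ^ Suc n) = norm (fs a b c n * z ^ n) * (norm ((a + of_nat n) * (b + of_nat n) / ((of_nat n + 1) * (c + of_nat n))) * norm z)"
    proof -
      have "fs a b c (Suc n) * z ^ Suc n = (fs a b c n * z ^ n) * (((a + of_nat n) * (b + of_nat n) / ((of_nat n + 1) * (c + of_nat n))) * z)"
        unfolding fsuc power_Suc by (simp only: ac_simps)
      then show ?thesis by (simp only: norm_mult)
    qed
    also have "\<dots> \<le> norm (fs a b c n * z ^ n) * r"
      using rho gn by (intro mult_left_mono) (auto intro: order.trans[OF mult_right_mono])
    finally show "norm (norm (fs a b c (Suc n) * z ^ Suc n)) \<le> r * norm (norm (fs a b c n * z ^ n))"
      by (simp add: mult.commute)
  qed
qed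

lemma exp_hyp_sums:
  fixes a b c q z :: complex
  assumes c: "\<forall>n::nat. c \<noteq> - of_nat n" and z: "norm z < 1"
  shows "(\<lambda>n. useq a b c q n * z ^ n) sums (exp (q * z) * hyp2F1 a b c z)"
proof -
  have e: "(\<lambda>n. (q*z)^n /\<^sub>R fact n) = (\<lambda>n. (q*z)^n / fact n)"
    by (simp add: scaleR_conv_of_real divide_inverse mult.commute)
  have s1: "summable (\<lambda>n. norm ((q*z)^n / fact n))" using summable_norm_exp[of "q*z"] by (simp add: e norm_divide divide_inverse mult.commute norm_mult norm_inverse)
  have s2: "summable (\<lambda>n. norm (fs a b c n * z ^ n))" by (rule hyp_summable[OF c z])
  have ex: "(\<Sum>n. (q*z)^n / fact n) = exp (q*z)" using exp_converges[of "q*z"] unfolding e by (simp add: sums_iff)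
  have hy: "(\<Sum>n. fs a b c n * z ^ n) = hyp2F1 a b c z" unfolding hyp2F1_def fs_def by simp
  have "(\<lambda>k. \<Sum>i\<le>k. (q*z)^i / fact i * (fs a b c (k - i) * z ^ (k - i))) sums (exp (q * z) * hyp2F1 a b c z)"
    using Cauchy_product_sums[OF s1 s2] unfolding ex hy .
  moreover have "useq a b c q k * z ^ k = (\<Sum>i\<le>k. (q*z)^i / fact i * (fs a b c (k - i) * z ^ (k - i)))" for k
  proof -
    have "useq a b c q k * z ^ k = (\<Sum>i=0..k. q^i / fact i * fs a b c (k - i)) * z ^ k"
      by (simp add: useq_U[OF c] fps_mult_nth)
    also have "\<dots> = (\<Sum>i\<le>k. (q*z)^i / fact i * (fs a b c (k - i) * z ^ (k - i)))"
      unfolding sum_distrib_right atMost_atLeast0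
    proof (rule sum.cong)
      fix i assume "i \<in> {0..k}"
      then have "z ^ k = z ^ i * z ^ (k - i)" by (simp add: power_add[symmetric])
      then show "q ^ i / fact i * fs a b c (k - i) * z ^ k = (q * z) ^ i / fact i * (fs a b c (k - i) * z ^ (k - i))"
        by (simp add: power_mult_distrib)
    qed simp
    finally show ?thesis .
  qed
  ultimately show ?thesis by simp
qed

theorem theorem3p2:
  fixes a b c p z :: complex
  assumes "\<forall>n::nat. c \<noteq> - of_nat n"
    and "norm z < 1"
  shows "(\<lambda>n. (useq a b c p n - vseq a b c p n) / 2 * z ^ n) sums (sinh (p * z) * hyp2F1 a b c z)"
proof -
  have S: "(\<lambda>n. (useq a b c p n * z ^ n - useq a b c (-p) n * z ^ n) / 2) sums
      ((exp (p * z) * hyp2F1 a b c z - exp (-p * z) * hyp2F1 a b c z) / 2)"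
    by (intro sums_divide sums_diff exp_hyp_sums assms)
  have V: "(exp (p * z) * hyp2F1 a b c z - exp (-p * z) * hyp2F1 a b c z) / 2 = sinh (p * z) * hyp2F1 a b c z"
    by (simp add: sinh_field_def algebra_simps diff_divide_distrib)
  have f: "(\<lambda>n. (useq a b c p n * z ^ n - useq a b c (-p) n * z ^ n) / 2) = (\<lambda>n. (useq a b c p n - vseq a b c p n) / 2 * z ^ n)"
    by (simp add: vseq_useq fun_eq_iff algebra_simps diff_divide_distrib)
  show ?thesis using S unfolding V f .
qed

end
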